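(* For each $h\in\{1,2\}$, let $\mathrm{bd}_h\in\mathbb{BD}^{\mathbb{Z}}_n$ be a non-empty integer BD shape represented by the closed integer graph $G_h=(\mathcal{N},w_h)$, and let $R_h$ be a subgraph of $G_h$ such that $\mathrm{closure}(R_h)=G_h$. Let $G_1\sqcup G_2=(\mathcal{N},w)$. Then $\mathrm{bd}_1\uplus\mathrm{bd}_2\neq\mathrm{bd}_1\cup\mathrm{bd}_2$ if and only if there exist an arc $(i,j)$ of $R_1$ and an arc $(k,\ell)$ of $R_2$ such that (1) $w_1(i,j)<w_2(i,j)$ and $w_2(k,\ell)<w_1(k,\ell)$; and (2) $w_1(i,j)+w_2(k,\ell)+2\le w(i,\ell)+w(k,j)$.
   Context: Let $\mathcal{N}=\{0,1,\dots,n\}$. An integer graph is a pair $(\mathcal{N},w)$ with $w:\mathcal{N}\times\mathcal{N}\to\mathbb{Z}\cup\{+\infty\}$ (with $d<+\infty$, $d+(+\infty)=+\infty$); $(i,j)$ is an arc if $w(i,j)<+\infty$. A path $n_0\cdots n_p$ has weight $\sum_t w(n_{t-1},n_t)$; the graph is consistent if no cycle has negative weight. Graphs are ordered by $G\unlhd G'$ iff $w\le w'$ pointwise. A consistent graph is closed if $w(i,i)=0$ and $w(i,j)\le w(i,k)+w(k,j)$ for all $i,j,k$. $\mathrm{closure}(G)$ is the pointwise maximum of all closed graphs $G^c\unlhd G$. $R$ is a subgraph of $G$ if every arc of $R$ is an arc of $G$ with the same weight. An integer BD shape is a set $\{\mathbf{x}\in\mathbb{Z}^n : \text{finitely many constraints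 } \pm x_i\le b,\ x_i-x_j\le b\}$ with $b\in\mathbb{Z}$; $\mathbb{BD}^{\mathbb{Z}}_n$ is the set of them. A consistent integer graph $G=(\mathcal{N},w)$ represents $\{\mathbf{x}\in\mathbb{Z}^n : x_i-x_j\le w(i,j)\ \forall i,j\in\mathcal{N}\}$ with $x_0:=0$. $G_1\sqcup G_2=(\mathcal{N},w)$ with $w(i,j)=\max(w_1(i,j),w_2(i,j))$. $\mathrm{bd}_1\uplus\mathrm{bd}_2$ is the least integer BD shape containing $\mathrm{bd}_1\cup\mathrm{bd}_2$, represented by $G_1\sqcup G_2$. *)

theory Defs
  imports Complex_Main "HOL-Library.Extended_Real"
begin

text \<open>An integer graph is a weight function on nodes with values in
  Z \<union> {+\<infinity>}, modelled as an ereal-valued function whose entries on N are integers or \<infinity>.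
  Entries outside N are irrelevant.\<close>

type_synonym graph = "nat \<Rightarrow> nat \<Rightarrow> ereal"

definition int_graph :: "nat \<Rightarrow> graph \<Rightarrow> bool" where
  "int_graph n w \<longleftrightarrow> (\<forall>i\<le>n. \<forall>j\<le>n. w i j = \<infinity> \<or> (\<exists>z::int. w i j = ereal (of_int z)))"

definition is_arc :: "nat \<Rightarrow> graph \<Rightarrow> nat \<Rightarrow> nat \<Rightarrow> bool" where
  "is_arc n w i j \<longleftrightarrow> i \<le> n \<and> j \<le> n \<and> w i j < \<infinity>"

fun path_weight :: "graph \<Rightarrow> nat list \<Rightarrow> ereal" where
  "path_weight w [] = 0"
| "path_weight w [a] = 0"
| "path_weight w (a # b # rest) = w a b + path_weight w (b # rest)"

definition is_cycle :: "nat \<Rightarrow> nat list \<Rightarrow> bool" where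
  "is_cycle n ns \<longleftrightarrow> length ns \<ge> 2 \<and> hd ns = last ns \<and> (\<forall>v\<in>set ns. v \<le> n)"

definition consistent :: "nat \<Rightarrow> graph \<Rightarrow> bool" where
  "consistent n w \<longleftrightarrow> int_graph n w \<and> (\<forall>ns. is_cycle n ns \<longrightarrow> path_weight w ns \<ge> 0)"

definition graph_le :: "nat \<Rightarrow> graph \<Rightarrow> graph \<Rightarrow> bool" where
  "graph_le n w w' \<longleftrightarrow> (\<forall>i\<le>n. \<forall>j\<le>n. w i j \<le> w' i j)"

definition closed_graph :: "nat \<Rightarrow> graph \<Rightarrow> bool" where
  "closed_graph n w \<longleftrightarrow> consistent n w \<and> (\<forall>i\<le>n. w i i = 0) \<and>
     (\<forall>i\<le>n. \<forall>j\<le>n. \<forall>k\<le>n. w i j \<le> w i k + w k j)"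

definition graph_closure :: "nat \<Rightarrow> graph \<Rightarrow> graph" where
  "graph_closure n w i j = (SUP c \<in> {c. int_graph n c \<and> closed_graph n c \<and> graph_le n c w}. c i j)"

definition graph_eq :: "nat \<Rightarrow> graph \<Rightarrow> graph \<Rightarrow> bool" where
  "graph_eq n w w' \<longleftrightarrow> (\<forall>i\<le>n. \<forall>j\<le>n. w i j = w' i j)"

definition subgraph :: "nat \<Rightarrow> graph \<Rightarrow> graph \<Rightarrow> bool" where
  "subgraph n r w \<longleftrightarrow> (\<forall>i\<le>n. \<forall>j\<le>n. is_arc n r i j \<longrightarrow> is_arc n w i j \<and> r i j = w i j)"

definition graph_join :: "graph \<Rightarrow> graph \<Rightarrow> graph" where
  "graph_join w1 w2 i j = max (w1 i j) (w2 i j)"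

text \<open>Points of Z^n: functions x with x 0 = 0 (the auxiliary variable x_0) and
  x k = 0 for k > n; coordinates x_1..x_n.\<close>
definition points :: "nat \<Rightarrow> (nat \<Rightarrow> int) set" where
  "points n = {x. x 0 = 0 \<and> (\<forall>k>n. x k = 0)}"

definition gamma :: "nat \<Rightarrow> graph \<Rightarrow> (nat \<Rightarrow> int) set" where
  "gamma n w = {x \<in> points n. \<forall>i\<le>n. \<forall>j\<le>n. ereal (of_int (x i - x j)) \<le> w i j}"

text \<open>Integer BD shapes: sets defined by finitely many constraints x_i - x_j \<le> b
  (i, j \<in> N, with x_0 = 0, which covers \<plusminus>x_i \<le> b), b integer.\<close>
definition BD_Z :: "nat \<Rightarrow> (nat \<Rightarrow> int) set set" where
  "BD_Z n = {S. \<exists>C :: (nat \<times> nat \<times> int) set. finite C \<and> (\<forall>(i,j,b)\<in>C. i \<le> n \<and> j \<le> n) \<and>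
      S = {x \<in> points n. \<forall>(i,j,b)\<in>C. x i - x j \<le> b}}"

definition bd_hull_union :: "nat \<Rightarrow> (nat \<Rightarrow> int) set \<Rightarrow> (nat \<Rightarrow> int) set \<Rightarrow> (nat \<Rightarrow> int) set" where
  "bd_hull_union n S1 S2 = \<Inter> {S \<in> BD_Z n. S1 \<union> S2 \<subseteq> S}"

end

theory Submission
  imports Defs
begin

definition pre_closed :: "nat \<Rightarrow> graph \<Rightarrow> bool" where
  "pre_closed n w \<longleftrightarrow> int_graph n w \<and> (\<forall>i\<le>n. w i i = 0) \<and>
     (\<forall>i\<le>n. \<forall>j\<le>n. \<forall>k\<le>n. w i j \<le> w i k + w k j)"

lemma ig_cases:
  assumes "int_graph n w" "i \<le> n" "j \<le> n"
  obtains "w i j = \<infinity>" | z where "w i j = ereal (of_int z)"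
  using assms unfolding int_graph_def by blast

lemma ig_not_minf: "int_graph n w \<Longrightarrow> i \<le> n \<Longrightarrow> j \<le> n \<Longrightarrow> w i j \<noteq> -\<infinity>"
  by (metis MInfty_neq_PInfty(1) MInfty_neq_ereal(2) ig_cases)

lemma path_weight_ge:
  assumes tri: "\<forall>i\<le>n. \<forall>j\<le>n. \<forall>k\<le>n. w i j \<le> w i k + w k j"
  shows "length ns \<ge> 2 \<Longrightarrow> \<forall>v\<in>set ns. v \<le> n \<Longrightarrow> w (hd ns) (last ns) \<le> path_weight w ns"
proof (induction ns rule: induct_list012)
  case (3 a b rest)
  show ?case
  proof (cases rest)
    case Nil
    then show ?thesis by simp
  next
    case (Cons c r)
    have IH: "w b (last (b#rest)) \<le> path_weight w (b # rest)"
      using 3 Cons by auto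
    have ln: "last (b#rest) \<le> n" using 3(4) by (metis last_in_set list.distinct(1) list.set_intros(2))
    have "w a (last (b#rest)) \<le> w a b + w b (last (b#rest))"
      using tri 3(4) ln by (meson list.set_intros(1) list.set_intros(2))
    also have "\<dots> \<le> w a b + path_weight w (b # rest)" using IH by (simp add: add_left_mono)
    finally show ?thesis using Cons by simp
  qed
qed auto

lemma pre_closed_closed:
  assumes "pre_closed n w" shows "closed_graph n w"
proof -
  have "path_weight w ns \<ge> 0" if "is_cycle n ns" for ns
  proof -
    have "w (hd ns) (last ns) \<le> path_weight w ns"
      using path_weight_ge[of n w ns] assms that unfolding pre_closed_def is_cycle_def by blast
    moreover have "hd ns \<le> n" using that unfolding is_cycle_def
      by (metis hd_in_set le_zero_eq list.size(3) numeral_le_iff semiring_norm(69) zero_le_numeral)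
    ultimately show ?thesis using assms that unfolding pre_closed_def is_cycle_def by auto
  qed
  then show ?thesis using assms unfolding pre_closed_def closed_graph_def consistent_def by auto
qed

lemma ereal_int_diff_le:
  assumes "ereal (of_int a) \<le> ereal (of_int b) + w" "w \<noteq> -\<infinity>"
  shows "ereal (of_int (a - b)) \<le> w"
  using assms by (cases w) auto

lemma pre_closed_point:
  assumes pc: "pre_closed n w"
  shows "\<exists>x. x \<in> gamma n w"
proof -
  have ig: "int_graph n w" and diag: "\<forall>i\<le>n. w i i = 0"
    and tri: "\<forall>i\<le>n. \<forall>j\<le>n. \<forall>k\<le>n. w i j \<le> w i k + w k j"
    using pc unfolding pre_closed_def by auto
  define f where "f k = Min ((\<lambda>l. w k l) ` {..n})" for k
  have fin: "\<exists>m\<le>n. f k = w k m" for k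
  proof -
    have "Min (w k ` {..n}) \<in> w k ` {..n}" by (rule Min_in) auto
    then obtain m where "m \<in> {..n}" "Min (w k ` {..n}) = w k m" by (rule imageE)
    then show ?thesis unfolding f_def by auto
  qed
  have fle: "f k \<le> w k l" if "l \<le> n" for k l
    unfolding f_def using that by auto
  have fint: "\<exists>z. f k = ereal (of_int z)" if "k \<le> n" for k
  proof -
    obtain m where m: "m \<le> n" "f k = w k m" using fin by blast
    have "f k \<le> 0" using fle[of k k] diag that by auto
    then show ?thesis using m ig_cases[OF ig that m(1)] by force
  qed
  define z where "z k = (SOME z. f k = ereal (of_int z))" for k
  have zk: "f k = ereal (of_int (z k))" if "k \<le> n" for k
    unfolding z_def using someI_ex[OF fint[OF that]] .
  define x where "x k = (if k \<le> n then z k - z 0 else 0)" for k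
  have "x \<in> gamma n w"
    unfolding gamma_def points_def
  proof (intro CollectI conjI allI impI)
    show "x 0 = 0" unfolding x_def by simp
    show "x k = 0" if "k > n" for k using that unfolding x_def by simp
    fix p q assume p: "p \<le> n" and q: "q \<le> n"
    obtain m where m: "m \<le> n" "f q = w q m" using fin by blast
    have "f p \<le> w p m" using fle m by auto
    also have "\<dots> \<le> w p q + w q m" using tri p q m by auto
    finally have "ereal (of_int (z p)) \<le> ereal (of_int (z q)) + w p q"
      using zk p q m by (simp add: add.commute)
    then have "ereal (of_int (z p - z q)) \<le> w p q"
      using ereal_int_diff_le ig_not_minf[OF ig p q] by blast
    then show "ereal (of_int (x p - x q)) \<le> w p q" using p q unfolding x_def by simp
  qed
  then show ?thesis by blast
qed

definition step :: "graph \<Rightarrow> nat \<Rightarrow> nat \<Rightarrow> int \<Rightarrow> graph" where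
  "step w i j c p q = min (w p q) (w p j + ereal (of_int (-c)) + w i q)"

lemma min_plus_cases: "min (a::ereal) b + min c d = a + c \<or> min a b + min c d = a + d \<or>
   min a b + min c d = b + c \<or> min a b + min c d = b + d"
  by (simp add: min_def)

lemma cpos: "ereal (of_int c) \<le> (x::ereal) \<Longrightarrow> 0 \<le> x + ereal (of_int (-c))"
  by (cases x) auto

lemma step_le: "step w i j c p q \<le> w p q" unfolding step_def by simp

lemma step_back: "w j j = 0 \<Longrightarrow> w i i = 0 \<Longrightarrow> step w i j c j i \<le> ereal (of_int (-c))"
  unfolding step_def by simp

lemma step_pre_closed:
  assumes pc: "pre_closed n w" and ij: "i \<le> n" "j \<le> n" and c: "ereal (of_int c) \<le> w i j"
  shows "pre_closed n (step w i j c)"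
proof -
  have ig: "int_graph n w" and diag: "\<forall>i\<le>n. w i i = 0"
    and tri: "\<forall>i\<le>n. \<forall>j\<le>n. \<forall>k\<le>n. w i j \<le> w i k + w k j"
    using pc unfolding pre_closed_def by auto
  let ?C = "ereal (of_int (-c))"
  have C0: "0 \<le> w i j + ?C" using cpos[OF c] .
  have "int_graph n (step w i j c)"
    unfolding int_graph_def
  proof (intro allI impI)
    fix p q assume p: "p \<le> n" and q: "q \<le> n"
    show "step w i j c p q = \<infinity> \<or> (\<exists>z. step w i j c p q = ereal (of_int z))"
    proof (cases rule: ig_cases[OF ig p q])
      case 1
      then show ?thesis
      proof (cases rule: ig_cases[OF ig p ij(2)])
        case 1 then show ?thesis using \<open>w p q = \<infinity>\<close> ig_not_minf[OF ig ij(1) q] by (simp add: step_def)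
      next
        case (2 z1)
        then show ?thesis
        proof (cases rule: ig_cases[OF ig ij(1) q])
          case 1 then show ?thesis using \<open>w p q = \<infinity>\<close> 2 by (simp add: step_def)
        next
          case (2 z2)
          then show ?thesis using \<open>w p q = \<infinity>\<close> \<open>w p j = ereal (of_int z1)\<close>
            by (intro disjI2 exI[of _ "z1 - c + z2"]) (simp add: step_def)
        qed
      qed
    next
      case (2 z)
      then show ?thesis
      proof (cases rule: ig_cases[OF ig p ij(2)])
        case 1 then show ?thesis using \<open>w p q = ereal (of_int z)\<close> ig_not_minf[OF ig ij(1) q] by (simp add: step_def)
      next
        case (2 z1)
        then show ?thesis
        proof (cases rule: ig_cases[OF ig ij(1) q])
          case 1 then show ?thesis using \<open>w p q = ereal (of_int z)\<close> 2 by (simp add: step_def)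
        next
          case (2 z2)
          then show ?thesis using \<open>w p q = ereal (of_int z)\<close> \<open>w p j = ereal (of_int z1)\<close>
            by (intro disjI2 exI[of _ "min z (z1 - c + z2)"]) (simp add: min_def step_def)
        qed
      qed
    qed
  qed
  moreover have "\<forall>p\<le>n. step w i j c p p = 0"
  proof (intro allI impI)
    fix p assume p: "p \<le> n"
    have "w i j \<le> w i p + w p j" using tri p ij by auto
    then have "w i j + ?C \<le> w p j + ?C + w i p"
      by (metis add_right_mono add.commute add.left_commute)
    then have "0 \<le> w p j + ?C + w i p" using C0 by simp
    then show "step w i j c p p = 0" unfolding step_def using diag p by simp
  qed
  moreover have "\<forall>p\<le>n. \<forall>q\<le>n. \<forall>m\<le>n. step w i j c p q \<le> step w i j c p m + step w i j c m q"
  proof (intro allI impI)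
    fix p q m assume p: "p \<le> n" and q: "q \<le> n" and m: "m \<le> n"
    let ?A = "\<lambda>p q. w p j + ?C + w i q"
    have h1: "min (w p q) (?A p q) \<le> w p m + w m q"
      using tri p q m by (meson min.coboundedI1)
    have "w p j \<le> w p m + w m j" using tri p m ij by auto
    then have "?A p q \<le> w p m + ?A m q"
      by (metis add_right_mono add.assoc)
    then have h2: "min (w p q) (?A p q) \<le> w p m + ?A m q" by (meson min.coboundedI2)
    have "w i q \<le> w i m + w m q" using tri q m ij by auto
    then have "?A p q \<le> ?A p m + w m q"
      by (metis add_left_mono add.assoc)
    then have h3: "min (w p q) (?A p q) \<le> ?A p m + w m q" by (meson min.coboundedI2)
    have "w i j \<le> w i m + w m j" using tri m ij by auto
    then have "0 \<le> w i m + w m j + ?C" using C0 by (meson add_right_mono order_trans)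
    then have "?A p q \<le> ?A p q + (w i m + w m j + ?C)" by (simp add: add_increasing2)
    also have "\<dots> = ?A p m + ?A m q" by (simp add: ac_simps)
    finally have h4: "min (w p q) (?A p q) \<le> ?A p m + ?A m q" by (meson min.coboundedI2)
    show "step w i j c p q \<le> step w i j c p m + step w i j c m q"
      unfolding step_def using min_plus_cases[of "w p m" "?A p m" "w m q" "?A m q"] h1 h2 h3 h4
      by auto
  qed
  ultimately show ?thesis unfolding pre_closed_def by blast
qed

lemma gamma_mono: "(\<And>p q. p \<le> n \<Longrightarrow> q \<le> n \<Longrightarrow> w' p q \<le> w p q) \<Longrightarrow> gamma n w' \<subseteq> gamma n w"
  unfolding gamma_def by (auto simp del: of_int_diff) (meson order_trans)

lemma tight:
  assumes pc: "pre_closed n w" and ij: "i \<le> n" "j \<le> n" and c: "ereal (of_int c) \<le> w i j"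
  shows "\<exists>y\<in>gamma n w. c \<le> y i - y j"
proof -
  obtain y where y: "y \<in> gamma n (step w i j c)"
    using pre_closed_point[OF step_pre_closed[OF pc ij c]] by blast
  have "y \<in> gamma n w" using y gamma_mono[of n "step w i j c" w] step_le by blast
  have "ereal (of_int (y j - y i)) \<le> step w i j c j i" using y ij unfolding gamma_def by auto
  also have "\<dots> \<le> ereal (of_int (-c))" using step_back pc ij unfolding pre_closed_def by auto
  finally have "c \<le> y i - y j" by simp
  then show ?thesis using \<open>y \<in> gamma n w\<close> by blast
qed

lemma closed_pre: "closed_graph n w \<Longrightarrow> pre_closed n w"
  unfolding closed_graph_def pre_closed_def consistent_def by auto

lemma join_pre_closed:
  assumes "pre_closed n w1" "pre_closed n w2"
  shows "pre_closed n (graph_join w1 w2)"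
proof -
  have "int_graph n (graph_join w1 w2)"
    using assms unfolding pre_closed_def int_graph_def graph_join_def
    by (metis max_def)
  moreover have "\<forall>i\<le>n. graph_join w1 w2 i i = 0"
    using assms unfolding pre_closed_def graph_join_def by auto
  moreover have "\<forall>i\<le>n. \<forall>j\<le>n. \<forall>k\<le>n. graph_join w1 w2 i j \<le> graph_join w1 w2 i k + graph_join w1 w2 k j"
  proof (intro allI impI)
    fix i j k assume "i \<le> n" "j \<le> n" "k \<le> n"
    then have a: "w1 i j \<le> w1 i k + w1 k j" and b: "w2 i j \<le> w2 i k + w2 k j"
      using assms unfolding pre_closed_def by auto
    have "w1 i k + w1 k j \<le> max (w1 i k) (w2 i k) + max (w1 k j) (w2 k j)"
      by (intro add_mono) auto
    moreover have "w2 i k + w2 k j \<le> max (w1 i k) (w2 i k) + max (w1 k j) (w2 k j)"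
      by (intro add_mono) auto
    ultimately show "graph_join w1 w2 i j \<le> graph_join w1 w2 i k + graph_join w1 w2 k j"
      unfolding graph_join_def using a b by (meson max.boundedI order_trans)
  qed
  ultimately show ?thesis unfolding pre_closed_def by blast
qed

lemma gamma_BD:
  assumes "int_graph n w" shows "gamma n w \<in> BD_Z n"
proof -
  define C where "C = {(i,j,b). i \<le> n \<and> j \<le> n \<and> w i j = ereal (of_int b)}"
  have "C \<subseteq> (\<lambda>(i,j). (i,j, \<lfloor>real_of_ereal (w i j)\<rfloor>)) ` ({..n} \<times> {..n})"
  proof
    fix t assume "t \<in> C"
    then obtain i j b where t: "t = (i,j,b)" "i \<le> n" "j \<le> n" "w i j = ereal (of_int b)"
      unfolding C_def by auto
    then show "t \<in> (\<lambda>(i,j). (i,j, \<lfloor>real_of_ereal (w i j)\<rfloor>)) ` ({..n} \<times> {..n})"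
      by (intro image_eqI[of _ _ "(i,j)"]) auto
  qed
  then have fin: "finite C" by (rule finite_subset) auto
  have "gamma n w = {x \<in> points n. \<forall>(i,j,b)\<in>C. x i - x j \<le> b}"
  proof (intro set_eqI iffI)
    fix x assume "x \<in> gamma n w"
    then show "x \<in> {x \<in> points n. \<forall>(i,j,b)\<in>C. x i - x j \<le> b}"
      unfolding gamma_def C_def by fastforce
  next
    fix x assume x: "x \<in> {x \<in> points n. \<forall>(i,j,b)\<in>C. x i - x j \<le> b}"
    have "ereal (of_int (x i - x j)) \<le> w i j" if "i \<le> n" "j \<le> n" for i j
    proof (cases rule: ig_cases[OF assms that])
      case 1 then show ?thesis by simp
    next
      case (2 z)
      then have "(i,j,z) \<in> C" using that unfolding C_def by auto
      then have "x i - x j \<le> z" using x by auto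
      then show ?thesis using 2 by simp
    qed
    then show "x \<in> gamma n w" using x unfolding gamma_def by auto
  qed
  then show ?thesis unfolding BD_Z_def using fin unfolding C_def by blast
qed

lemma closure_violation:
  assumes sub: "subgraph n R G" and eq: "graph_eq n (graph_closure n R) G"
    and x: "x \<in> points n" and nx: "x \<notin> gamma n G"
  shows "\<exists>i j. is_arc n R i j \<and> G i j < ereal (of_int (x i - x j))"
proof (rule ccontr)
  assume H: "\<not> ?thesis"
  define d where "d p q = ereal (of_int (x p - x q))" for p q
  have pcd: "pre_closed n d"
    unfolding pre_closed_def int_graph_def d_def by (auto simp del: of_int_diff)
  have le: "graph_le n d R"
    unfolding graph_le_def
  proof (intro allI impI)
    fix p q assume pq: "p \<le> n" "q \<le> n"
    show "d p q \<le> R p q"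
    proof (cases "is_arc n R p q")
      case True
      then have "R p q = G p q" using sub pq unfolding subgraph_def by auto
      then show ?thesis using H True unfolding d_def by (metis not_le)
    next
      case False
      then have "R p q = \<infinity>" using pq unfolding is_arc_def by (simp add: less_ereal.simps(4) top.not_eq_extremum)
      then show ?thesis by simp
    qed
  qed
  have "ereal (of_int (x p - x q)) \<le> G p q" if "p \<le> n" "q \<le> n" for p q
  proof -
    have "d p q \<le> graph_closure n R p q"
      unfolding graph_closure_def
      by (rule SUP_upper) (use pcd le pre_closed_closed[OF pcd] in \<open>auto simp: pre_closed_def\<close>)
    then show ?thesis using eq that unfolding graph_eq_def d_def by auto
  qed
  then have "x \<in> gamma n G" using x unfolding gamma_def by auto
  then show False using nx by blast
qed

lemma ig_lt_int:
  assumes "int_graph n w" "i \<le> n" "j \<le> n" "w i j < v"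
  obtains g where "w i j = ereal (of_int g)"
  using assms by (cases rule: ig_cases[OF assms(1-3)]) auto

theorem theorem7:
  fixes n :: nat and G1 G2 R1 R2 :: graph and bd1 bd2 :: "(nat \<Rightarrow> int) set"
  assumes "bd1 \<in> BD_Z n" and "bd2 \<in> BD_Z n"
    and "bd1 \<noteq> {}" and "bd2 \<noteq> {}"
    and "int_graph n G1" and "int_graph n G2"
    and "closed_graph n G1" and "closed_graph n G2"
    and "bd1 = gamma n G1" and "bd2 = gamma n G2"
    and "int_graph n R1" and "int_graph n R2"
    and "subgraph n R1 G1" and "subgraph n R2 G2"
    and "graph_eq n (graph_closure n R1) G1" and "graph_eq n (graph_closure n R2) G2"
  shows "bd_hull_union n bd1 bd2 \<noteq> bd1 \<union> bd2 \<longleftrightarrow>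
    (\<exists>i j k l. is_arc n R1 i j \<and> is_arc n R2 k l \<and>
       G1 i j < G2 i j \<and> G2 k l < G1 k l \<and>
       G1 i j + G2 k l + 2 \<le> graph_join G1 G2 i l + graph_join G1 G2 k j)"
proof -
  define W where "W = graph_join G1 G2"
  have pc1: "pre_closed n G1" and pc2: "pre_closed n G2"
    using assms closed_pre by auto
  have pcW: "pre_closed n W" unfolding W_def using join_pre_closed[OF pc1 pc2] .
  have igW: "int_graph n W" using pcW unfolding pre_closed_def by auto
  have sub1: "gamma n G1 \<subseteq> gamma n W" and sub2: "gamma n G2 \<subseteq> gamma n W"
    by (rule gamma_mono; simp add: W_def graph_join_def)+
  have hull: "bd_hull_union n bd1 bd2 = gamma n W"
  proof
    show "bd_hull_union n bd1 bd2 \<subseteq> gamma n W"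
      unfolding bd_hull_union_def using gamma_BD[OF igW] sub1 sub2 assms(9,10) by blast
  next
    show "gamma n W \<subseteq> bd_hull_union n bd1 bd2"
      unfolding bd_hull_union_def
    proof (intro Inter_greatest subsetI)
      fix S x assume S: "S \<in> {S \<in> BD_Z n. bd1 \<union> bd2 \<subseteq> S}" and x: "x \<in> gamma n W"
      then obtain C where C: "\<forall>(i,j,b)\<in>C. i \<le> n \<and> j \<le> n"
        and Seq: "S = {x \<in> points n. \<forall>(i,j,b)\<in>C. x i - x j \<le> b}"
        unfolding BD_Z_def by auto
      have "x i - x j \<le> b" if t: "(i,j,b) \<in> C" for i j b
      proof -
        have ij: "i \<le> n" "j \<le> n" using C t by auto
        have xw: "ereal (of_int (x i - x j)) \<le> max (G1 i j) (G2 i j)"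
          using x ij unfolding gamma_def W_def graph_join_def by auto
        have "\<exists>y\<in>bd1 \<union> bd2. x i - x j \<le> y i - y j"
        proof (cases "G2 i j \<le> G1 i j")
          case True
          then have "ereal (of_int (x i - x j)) \<le> G1 i j" using xw by (simp add: max_def)
          then show ?thesis using tight[OF pc1 ij] assms(9) by blast
        next
          case False
          then have "ereal (of_int (x i - x j)) \<le> G2 i j" using xw by (metis max.absorb2 nle_le)
          then show ?thesis using tight[OF pc2 ij] assms(10) by blast
        qed
        then obtain y where y: "y \<in> S" "x i - x j \<le> y i - y j" using S by blast
        have "y i - y j \<le> b" using y(1) t unfolding Seq by auto
        then show ?thesis using y(2) by simp
      qed
      moreover have "x \<in> points n" using x unfolding gamma_def by auto
      ultimately show "x \<in> S" unfolding Seq by auto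
    qed
  qed
  have union_sub: "bd1 \<union> bd2 \<subseteq> gamma n W" using sub1 sub2 assms(9,10) by blast
  have L: "bd_hull_union n bd1 bd2 \<noteq> bd1 \<union> bd2 \<longleftrightarrow>
      (\<exists>x\<in>gamma n W. x \<notin> gamma n G1 \<and> x \<notin> gamma n G2)"
    using hull union_sub assms(9,10) by blast
  show ?thesis
  proof
    assume "bd_hull_union n bd1 bd2 \<noteq> bd1 \<union> bd2"
    then obtain x where x: "x \<in> gamma n W" "x \<notin> gamma n G1" "x \<notin> gamma n G2" using L by blast
    have xp: "x \<in> points n" using x unfolding gamma_def by auto
    obtain i j where a1: "is_arc n R1 i j" and v1: "G1 i j < ereal (of_int (x i - x j))"
      using closure_violation[OF assms(13,15) xp x(2)] by blast
    obtain k l where a2: "is_arc n R2 k l" and v2: "G2 k l < ereal (of_int (x k - x l))"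
      using closure_violation[OF assms(14,16) xp x(3)] by blast
    have ij: "i \<le> n" "j \<le> n" using a1 unfolding is_arc_def by auto
    have kl: "k \<le> n" "l \<le> n" using a2 unfolding is_arc_def by auto
    have xW: "ereal (of_int (x p - x q)) \<le> W p q" if "p \<le> n" "q \<le> n" for p q
      using x(1) that unfolding gamma_def by auto
    have c1: "G1 i j < G2 i j"
      using xW[OF ij] v1 unfolding W_def graph_join_def by (metis max_def not_le order.strict_trans2)
    have c2: "G2 k l < G1 k l"
      using xW[OF kl] v2 unfolding W_def graph_join_def by (metis max_def not_le order.strict_trans2)
    obtain g1 where g1: "G1 i j = ereal (of_int g1)"
      using ig_lt_int[OF assms(5) ij v1] by auto
    obtain g2 where g2: "G2 k l = ereal (of_int g2)"
      using ig_lt_int[OF assms(6) kl v2] by auto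
    have "g1 < x i - x j" using v1 g1 by simp
    moreover have "g2 < x k - x l" using v2 g2 by simp
    ultimately have "g1 + g2 + 2 \<le> (x i - x l) + (x k - x j)" by linarith
    then have "ereal (of_int (g1 + g2 + 2)) \<le> ereal (of_int ((x i - x l) + (x k - x j)))"
      by (simp only: ereal_less_eq(3) of_int_le_iff)
    moreover have "G1 i j + G2 k l + 2 = ereal (of_int (g1 + g2 + 2))" using g1 g2 by simp
    moreover have "ereal (of_int ((x i - x l) + (x k - x j))) = ereal (of_int (x i - x l)) + ereal (of_int (x k - x j))"
      by simp
    ultimately have "G1 i j + G2 k l + 2 \<le> ereal (of_int (x i - x l)) + ereal (of_int (x k - x j))"
      by simp
    also have "\<dots> \<le> W i l + W k j" using xW ij kl by (intro add_mono) auto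
    finally show "\<exists>i j k l. is_arc n R1 i j \<and> is_arc n R2 k l \<and>
       G1 i j < G2 i j \<and> G2 k l < G1 k l \<and>
       G1 i j + G2 k l + 2 \<le> graph_join G1 G2 i l + graph_join G1 G2 k j"
      using a1 a2 c1 c2 unfolding W_def by blast
  next
    assume "\<exists>i j k l. is_arc n R1 i j \<and> is_arc n R2 k l \<and>
       G1 i j < G2 i j \<and> G2 k l < G1 k l \<and>
       G1 i j + G2 k l + 2 \<le> graph_join G1 G2 i l + graph_join G1 G2 k j"
    then obtain i j k l where a1: "is_arc n R1 i j" and a2: "is_arc n R2 k l"
      and c1: "G1 i j < G2 i j" and c2: "G2 k l < G1 k l"
      and c3: "G1 i j + G2 k l + 2 \<le> W i l + W k j"
      unfolding W_def by blast
    have ij: "i \<le> n" "j \<le> n" using a1 unfolding is_arc_def by auto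
    have kl: "k \<le> n" "l \<le> n" using a2 unfolding is_arc_def by auto
    obtain g1 where g1: "G1 i j = ereal (of_int g1)"
      using ig_lt_int[OF assms(5) ij c1] by auto
    obtain g2 where g2: "G2 k l = ereal (of_int g2)"
      using ig_lt_int[OF assms(6) kl c2] by auto
    define a where "a = g1 + 1"
    define b where "b = g2 + 1"
    have aW: "ereal (of_int a) \<le> W i j"
    proof (cases rule: ig_cases[OF assms(6) ij])
      case 1 then show ?thesis unfolding W_def graph_join_def by simp
    next
      case (2 z)
      then have "g1 < z" using c1 g1 by simp
      then have "ereal (of_int a) \<le> G2 i j" using 2 unfolding a_def by simp
      then show ?thesis unfolding W_def graph_join_def by (simp add: le_max_iff_disj)
    qed
    have bW: "ereal (of_int b) \<le> W k l"
    proof (cases rule: ig_cases[OF assms(5) kl])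
      case 1 then show ?thesis unfolding W_def graph_join_def by simp
    next
      case (2 z)
      then have "g2 < z" using c2 g2 by simp
      then have "ereal (of_int b) \<le> G1 k l" using 2 unfolding b_def by simp
      then show ?thesis unfolding W_def graph_join_def by (simp add: le_max_iff_disj)
    qed
    define W1 where "W1 = step W i j a"
    have pc1': "pre_closed n W1" unfolding W1_def using step_pre_closed[OF pcW ij aW] .
    have abW: "ereal (of_int (a + b)) \<le> W i l + W k j"
      using c3 g1 g2 unfolding a_def b_def by (simp add: add.commute add.left_commute)
    have "ereal (of_int b) \<le> W k j + ereal (of_int (-a)) + W i l"
    proof (cases rule: ig_cases[OF igW kl(1) ij(2)])
      case 1 then show ?thesis using ig_not_minf[OF igW ij(1) kl(2)] by simp
    next
      case (2 z1)
      then show ?thesis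
      proof (cases rule: ig_cases[OF igW ij(1) kl(2)])
        case 1 then show ?thesis using 2 by simp
      next
        case (2 z2)
        then show ?thesis using abW \<open>W k j = ereal (of_int z1)\<close> by simp
      qed
    qed
    then have bW1: "ereal (of_int b) \<le> W1 k l" using bW unfolding W1_def step_def by simp
    define W2 where "W2 = step W1 k l b"
    have pc2': "pre_closed n W2" unfolding W2_def using step_pre_closed[OF pc1' kl bW1] .
    obtain x where x: "x \<in> gamma n W2" using pre_closed_point[OF pc2'] by blast
    have "x \<in> gamma n W"
    proof -
      have "W2 p q \<le> W p q" for p q
        unfolding W2_def W1_def using step_le order_trans by metis
      then show ?thesis using x gamma_mono[of n W2 W] by blast
    qed
    moreover have "x \<notin> gamma n G1"
    proof
      assume "x \<in> gamma n G1"
      then have "ereal (of_int (x i - x j)) \<le> G1 i j" using ij unfolding gamma_def by auto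
      moreover have "ereal (of_int (x j - x i)) \<le> W2 j i" using x ij unfolding gamma_def by auto
      moreover have "W2 j i \<le> W1 j i" unfolding W2_def by (rule step_le)
      moreover have "W1 j i \<le> ereal (of_int (-a))" unfolding W1_def
        using step_back pcW ij unfolding pre_closed_def by auto
      ultimately have "ereal (of_int (x j - x i)) \<le> ereal (of_int (-a))" "ereal (of_int (x i - x j)) \<le> ereal (of_int g1)"
        using g1 by (metis order_trans)+
      then show False unfolding a_def by (simp only: ereal_less_eq(3) of_int_le_iff; linarith)
    qed
    moreover have "x \<notin> gamma n G2"
    proof
      assume "x \<in> gamma n G2"
      then have "ereal (of_int (x k - x l)) \<le> G2 k l" using kl unfolding gamma_def by auto
      moreover have "ereal (of_int (x l - x k)) \<le> W2 l k" using x kl unfolding gamma_def by auto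
      moreover have "W2 l k \<le> ereal (of_int (-b))" unfolding W2_def
        using step_back pc1' kl unfolding pre_closed_def by auto
      ultimately have "ereal (of_int (x l - x k)) \<le> ereal (of_int (-b))" "ereal (of_int (x k - x l)) \<le> ereal (of_int g2)"
        using g2 by (metis order_trans)+
      then show False unfolding b_def by (simp only: ereal_less_eq(3) of_int_le_iff; linarith)
    qed
    ultimately show "bd_hull_union n bd1 bd2 \<noteq> bd1 \<union> bd2" using L by blast
  qed
qed

end
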